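(* Let $p$ be a prime with $p\equiv 5\pmod 8$, and let $$U(k)=\binom{p-2}{k}_{2,2}+2^{p-1-k}\binom{p-2}{p-1-k}_{2,2}.$$ Then $U\!\left(\frac{p-1}{2}\right)\equiv 0\pmod p$.
   Context: For $n\in\mathbb N$ and $b,c\in\mathbb Z$, the generalized trinomial coefficients $\binom{n}{k}_{b,c}$ ($k\in\mathbb Z$) are the integers defined by $\left(x+b+\frac{c}{x}\right)^n=\sum_{k\in\mathbb Z}\binom{n}{k}_{b,c}x^k$. *)

theory Defs
  imports Main "HOL-Computational_Algebra.Primes"
begin

text \<open>Generalized trinomial coefficient: the coefficient of x^k in (x + b + c/x)^n.
  Expanding, a term with i factors x, j factors c/x and n-i-j factors b contributes
  (n choose i) * ((n-i) choose j) * b^(n-i-j) * c^j * x^(i-j).\<close>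
definition gtrinom :: "nat \<Rightarrow> int \<Rightarrow> int \<Rightarrow> int \<Rightarrow> int" where
  "gtrinom n k b c =
     (\<Sum>i\<le>n. \<Sum>j\<le>n - i.
        if int i - int j = k
        then int (n choose i) * int ((n - i) choose j) * b ^ (n - i - j) * c ^ j
        else 0)"

end

theory Submission
  imports Defs "HOL-Number_Theory.Number_Theory"
begin

lemma two_pow_cong:
  fixes p m :: nat
  assumes "prime p" and "p = 8*m+5"
  shows "[(2::int) ^ ((p - 1) div 2) = -1] (mod int p)"
proof -
  interpret G: GAUSS p 2
    using assms by (unfold_locales) (auto simp: cong_def)
  have h: "(int p - 1) div 2 = 4*int m+2" using assms(2) by simp
  have E: "G.E = (\<lambda>x. 2*x) ` {2*int m+2..4*int m+2}"
  proof -
    have C: "G.C = (\<lambda>x. 2*x) ` {0<..4*int m+2}"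
      unfolding G.C_def G.B_def G.A_def h image_image
    proof (rule image_cong[OF refl])
      fix x assume "x \<in> {0<..4*int m+2}"
      then show "x * 2 mod int p = 2 * x" using assms(2) by auto
    qed
    show ?thesis unfolding G.E_def C h
      by (auto simp: image_iff)
  qed
  have "card G.E = 2*m+1"
    unfolding E by (subst card_image) (auto simp: inj_on_def)
  with G.pre_gauss_lemma h have "[2 ^ nat (4*int m+2) = (-1::int)^(2*m+1)] (mod int p)"
    by simp
  moreover have "nat (4*int m+2) = (p-1) div 2" using assms(2) by simp
  ultimately show ?thesis by simp
qed

theorem mainTheorem9:
  fixes p :: nat
  assumes "prime p" and "p mod 8 = 5"
  defines "U \<equiv> (\<lambda>k::int. gtrinom (p - 2) k 2 2
                 + 2 ^ nat (int p - 1 - k) * gtrinom (p - 2) (int p - 1 - k) 2 2)"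
  shows "U (int ((p - 1) div 2)) mod int p = 0"
proof -
  obtain m where pm: "p = 8*m+5" using assms(2) by (metis div_mod_decomp mult.commute)
  define T where "T = gtrinom (p - 2) (int ((p - 1) div 2)) 2 2"
  have e1: "int p - 1 - int ((p - 1) div 2) = int ((p - 1) div 2)" using pm by simp
  have "U (int ((p - 1) div 2)) = T * (1 + 2 ^ ((p - 1) div 2))"
    unfolding U_def T_def e1 by (simp add: algebra_simps)
  moreover have "[T * (1 + 2 ^ ((p - 1) div 2)) = T * (1 + -1)] (mod int p)"
    by (intro cong_mult cong_add cong_refl two_pow_cong[OF assms(1) pm])
  ultimately show ?thesis by (simp add: cong_def)
qed

end
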